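(* Let $\mathbf P=UV^\top$ be the transition matrix of a Markov chain on $\{1,\dots,p\}$ with stationary distribution $\pi$ having all entries positive, where $U,V\in\mathbb R^{p\times r}$ are entrywise nonnegative with $U\mathbf 1_r=\mathbf 1_p$, $V^\top\mathbf 1_p=\mathbf 1_r$, each meta-state has an anchor state, and $\mathrm{rank}(U)=r$. Let $\mathbf H=[\mathbf h_1,\dots,\mathbf h_r]$ contain the right singular vectors of $\mathbf Q=\mathrm{diag}(\pi)\mathbf P[\mathrm{diag}(\pi)]^{-1/2}$ associated with its nonzero singular values. Then there exists a simplicial cone in $\mathbb R^r$ with $r$ extreme rays such that all rows of $\mathbf H$ are contained in this simplicial cone. Furthermore, for all anchor states $j$ of a meta-state, the $j$-th row of $\mathbf H$ lies exactly on one extreme ray of this simplicial cone.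
   Context: A state $j$ is an anchor state of meta-state $k$ if $V_{jk}>0$ and $V_{js}=0$ for all $s\neq k$. A simplicial cone in $\mathbb R^r$ with $r$ extreme rays is a set $\{\sum_{k=1}^ra_k\boldsymbol\ell_k: a_k\ge0\}$ for linearly independent $\boldsymbol\ell_1,\dots,\boldsymbol\ell_r\in\mathbb R^r$, its extreme rays being $\{a\boldsymbol\ell_k:a\ge0\}$. *)

theory Defs
  imports "HOL-Analysis.Analysis"
begin

text \<open>Matrices are rendered as real^'n^'m (m rows, n columns), entry (i,j) is A$i$j.\<close>

definition diag_mat :: "real^'n \<Rightarrow> real^'n^'n" where
  "diag_mat v = (\<chi> i j. if i = j then v $ i else 0)"

definition stochastic_matrix :: "real^'n^'n \<Rightarrow> bool" where
  "stochastic_matrix P \<longleftrightarrow> (\<forall>i j. P $ i $ j \<ge> 0) \<and> (\<forall>i. (\<Sum>j\<in>UNIV. P $ i $ j) = 1)"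

definition stationary_distribution :: "real^'n^'n \<Rightarrow> real^'n \<Rightarrow> bool" where
  "stationary_distribution P \<pi> \<longleftrightarrow> (\<forall>i. \<pi> $ i \<ge> 0) \<and> (\<Sum>i\<in>UNIV. \<pi> $ i) = 1 \<and> \<pi> v* P = \<pi>"

definition anchor_state :: "real^'r^'p \<Rightarrow> 'p \<Rightarrow> 'r \<Rightarrow> bool" where
  "anchor_state V j k \<longleftrightarrow> V $ j $ k > 0 \<and> (\<forall>s. s \<noteq> k \<longrightarrow> V $ j $ s = 0)"

definition right_singular_vector :: "real^'n^'m \<Rightarrow> real \<Rightarrow> real^'n \<Rightarrow> bool" where
  "right_singular_vector Q \<sigma> h \<longleftrightarrow> \<sigma> > 0 \<and> norm h = 1 \<and>
     (\<exists>u. norm u = 1 \<and> Q *v h = \<sigma> *\<^sub>R u \<and> transpose Q *v u = \<sigma> *\<^sub>R h)"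

definition simplicial_cone :: "('r \<Rightarrow> real^'r) \<Rightarrow> (real^'r) set" where
  "simplicial_cone l = {(\<Sum>k\<in>UNIV. a k *\<^sub>R l k) | a. \<forall>k. a k \<ge> 0}"

definition extreme_ray :: "('r \<Rightarrow> real^'r) \<Rightarrow> 'r \<Rightarrow> (real^'r) set" where
  "extreme_ray l k = {a *\<^sub>R l k | a. a \<ge> 0}"

end

theory Submission
  imports Defs
begin

lemma delta1: "(\<Sum>m\<in>(UNIV::'a::finite set). (if m = i then a else 0) *\<^sub>R (x m::'b::real_vector)) = a *\<^sub>R x i"
proof -
  have "(\<Sum>m\<in>UNIV. (if m = i then a else 0) *\<^sub>R x m) = (\<Sum>m\<in>UNIV. if m = i then a *\<^sub>R x m else 0)"
    by (rule sum.cong) auto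
  then show ?thesis by simp
qed

lemma two_delta: "(\<Sum>m\<in>(UNIV::'a::finite set). ((if m = i then a else 0) - (if m = i' then b else 0)) *\<^sub>R (x m::'b::real_vector)) = a *\<^sub>R x i - b *\<^sub>R x i'"
  by (simp add: scaleR_left_diff_distrib sum_subtractf delta1)

lemma transpose_diag: "transpose (diag_mat v) = diag_mat v"
  by (simp add: vec_eq_iff diag_mat_def transpose_def)

lemma delta_mult: "(\<Sum>i\<in>(UNIV::'a::finite set). (if j = i then a i else 0) * (b i::real)) = a j * b j"
proof -
  have "(\<Sum>i\<in>UNIV. (if j = i then a i else 0) * b i) = (\<Sum>i\<in>UNIV. if j = i then a i * b i else 0)"
    by (rule sum.cong) auto
  then show ?thesis by simp
qed

lemma diag_mult: "(diag_mat v *v y) $ j = v $ j * y $ j"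
  by (simp add: matrix_vector_mult_def diag_mat_def delta_mult)

theorem mainTheorem13:
  fixes U V :: "real^'r::finite^'p::finite"
    and P Q :: "real^'p^'p"
    and \<pi> :: "real^'p"
    and H :: "real^'r^'p"
  assumes P_def: "P = U ** transpose V"
    and markov: "stochastic_matrix P"
    and stat: "stationary_distribution P \<pi>"
    and pi_pos: "\<forall>i. \<pi> $ i > 0"
    and U_nonneg: "\<forall>i k. U $ i $ k \<ge> 0"
    and V_nonneg: "\<forall>j k. V $ j $ k \<ge> 0"
    and U_rows: "U *v (\<chi> k. 1) = (\<chi> i. 1)"
    and V_cols: "transpose V *v (\<chi> j. 1) = (\<chi> k. 1)"
    and anchors: "\<forall>k. \<exists>j. anchor_state V j k"
    and rankU: "rank U = CARD('r)"
    and Q_def: "Q = diag_mat \<pi> ** P ** diag_mat (\<chi> i. 1 / sqrt (\<pi> $ i))"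
    and H_orth: "\<forall>k l. (column k H) \<bullet> (column l H) = (if k = l then 1 else 0)"
    and H_sing: "\<forall>k. \<exists>\<sigma>. right_singular_vector Q \<sigma> (column k H)"
  shows "\<exists>l :: 'r \<Rightarrow> real^'r. inj l \<and> independent (range l) \<and>
           (\<forall>j. row j H \<in> simplicial_cone l) \<and>
           (\<forall>j k. anchor_state V j k \<longrightarrow> (\<exists>!k'. row j H \<in> extreme_ray l k'))"
proof -
  define s :: "real^'p" where "s = (\<chi> i. 1 / sqrt (\<pi> $ i))"
  have s_pos: "s $ j > 0" for j using pi_pos by (simp add: s_def)
  have QT: "transpose Q = diag_mat s ** (V ** (transpose U ** diag_mat \<pi>))"
    unfolding Q_def P_def s_def
    by (simp add: matrix_transpose_mul transpose_diag matrix_mul_assoc)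
  have "\<exists>w. column k H = diag_mat s *v (V *v w)" for k
  proof -
    obtain \<sigma> u where sp: "\<sigma> > 0" and u: "transpose Q *v u = \<sigma> *\<^sub>R column k H"
      using H_sing unfolding right_singular_vector_def by blast
    define x where "x = transpose U *v (diag_mat \<pi> *v u)"
    have "transpose Q *v u = diag_mat s *v (V *v x)"
      unfolding QT x_def by (simp add: matrix_vector_mul_assoc)
    then have "column k H = (1/\<sigma>) *\<^sub>R (diag_mat s *v (V *v x))"
      using u sp by simp
    also have "\<dots> = diag_mat s *v (V *v ((1/\<sigma>) *\<^sub>R x))"
      by (simp add: matrix_vector_mult_scaleR)
    finally show ?thesis by blast
  qed
  then obtain w where w: "\<And>k. column k H = diag_mat s *v (V *v w k)" by metis
  define W :: "real^'r^'r" where "W = (\<chi> i k. w k $ i)"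
  have Hent: "H $ j $ k = s $ j * (\<Sum>i\<in>UNIV. V $ j $ i * W $ i $ k)" for j k
  proof -
    have "H $ j $ k = column k H $ j" by (simp add: column_def)
    also have "\<dots> = s $ j * (V *v w k) $ j" by (simp add: w diag_mult)
    finally show ?thesis by (simp add: W_def matrix_vector_mult_def)
  qed
  have Hmat: "H = diag_mat s ** V ** W"
  proof -
    have "(diag_mat s ** V ** W) $ j $ k = s $ j * (\<Sum>i\<in>UNIV. V $ j $ i * W $ i $ k)" for j k
    proof -
      have "(diag_mat s ** V) $ j $ i = s $ j * V $ j $ i" for i
        by (simp add: matrix_matrix_mult_def diag_mat_def delta_mult)
      then show ?thesis
        by (simp add: matrix_matrix_mult_def[of "diag_mat s ** V"] sum_distrib_left mult.assoc)
    qed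
    then show ?thesis by (simp add: vec_eq_iff Hent)
  qed
  have HtH: "transpose H ** H = mat 1"
  proof -
    have "(transpose H ** H) $ k $ l = column k H \<bullet> column l H" for k l
      by (simp add: matrix_matrix_mult_def transpose_def inner_vec_def column_def)
    then show ?thesis using H_orth by (simp add: vec_eq_iff mat_def)
  qed
  define B where "B = transpose H ** diag_mat s ** V"
  have "B ** W = mat 1"
    unfolding B_def using HtH Hmat by (simp add: matrix_mul_assoc)
  then have WB: "W ** B = mat 1" by (simp add: matrix_left_right_inverse)
  have comb: "(\<Sum>i\<in>UNIV. c i *\<^sub>R row i W) = (\<chi> i. c i) v* W" for c
    by (simp add: vec_eq_iff sum_component vector_matrix_mult_def row_def)
  have key: "c i = 0" if "(\<Sum>i\<in>UNIV. c i *\<^sub>R row i W) = 0" for c i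
  proof -
    have "(\<chi> i. c i) = (\<chi> i. c i) v* (W ** B)" by (simp add: WB vector_matrix_mul_rid)
    also have "\<dots> = ((\<chi> i. c i) v* W) v* B" by (simp add: vector_matrix_mul_assoc)
    also have "\<dots> = 0" using that comb by (simp add: vector_matrix_mult_0)
    finally show ?thesis by (simp add: vec_eq_iff)
  qed
  define l where "l = (\<lambda>i. row i W)"
  have injl: "inj l"
  proof (rule injI)
    fix i i' assume eq: "l i = l i'"
    show "i = i'"
    proof (rule ccontr)
      assume ne: "i \<noteq> i'"
      let ?c = "\<lambda>m. (if m = i then (1::real) else 0) - (if m = i' then 1 else 0)"
      have "(\<Sum>m\<in>UNIV. ?c m *\<^sub>R row m W) = 0"
        using eq by (simp only: two_delta) (simp add: l_def)
      then have "?c i = 0" by (rule key)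
      then show False using ne by simp
    qed
  qed
  have indep: "independent (range l)"
  proof (rule independent_if_scalars_zero)
    show "finite (range l)" by simp
  next
    fix f x assume s0: "(\<Sum>x\<in>range l. f x *\<^sub>R x) = 0" and x: "x \<in> range l"
    then obtain i where xi: "x = l i" by blast
    have "(\<Sum>x\<in>range l. f x *\<^sub>R x) = (\<Sum>m\<in>UNIV. f (l m) *\<^sub>R l m)"
      using injl by (simp add: sum.reindex)
    then have "(\<Sum>m\<in>UNIV. f (l m) *\<^sub>R row m W) = 0" using s0 by (simp add: l_def)
    then have "f (l i) = 0" by (rule key)
    then show "f x = 0" using xi by simp
  qed
  have rowH: "row j H = (\<Sum>i\<in>UNIV. (s $ j * V $ j $ i) *\<^sub>R l i)" for j
    by (simp add: vec_eq_iff sum_component row_def l_def Hent sum_distrib_left mult.assoc)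
  have cone: "row j H \<in> simplicial_cone l" for j
    unfolding simplicial_cone_def using rowH[of j] s_pos[of j] V_nonneg
    by (auto intro!: exI[of _ "\<lambda>i. s $ j * V $ j $ i"])
  have anch: "\<exists>!k'. row j H \<in> extreme_ray l k'" if a: "anchor_state V j k" for j k
  proof -
    have pos: "s $ j * V $ j $ k > 0" using a s_pos[of j] by (simp add: anchor_state_def)
    have coef: "(\<lambda>i. (s $ j * V $ j $ i) *\<^sub>R l i) = (\<lambda>i. (if i = k then s $ j * V $ j $ k else 0) *\<^sub>R l i)"
      using a by (auto simp: anchor_state_def)
    have rj: "row j H = (s $ j * V $ j $ k) *\<^sub>R l k"
      using rowH[of j] by (simp only: coef delta1)
    show ?thesis
    proof (rule ex1I[of _ k])
      show "row j H \<in> extreme_ray l k"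
        unfolding extreme_ray_def using rj pos by auto
    next
      fix k' assume "row j H \<in> extreme_ray l k'"
      then obtain b where b: "row j H = b *\<^sub>R l k'" unfolding extreme_ray_def by blast
      show "k' = k"
      proof (rule ccontr)
        assume ne: "k' \<noteq> k"
        let ?c = "\<lambda>m. (if m = k then s $ j * V $ j $ k else 0) - (if m = k' then b else 0)"
        have "(\<Sum>m\<in>UNIV. ?c m *\<^sub>R row m W) = 0"
          using rj b by (simp only: two_delta) (simp add: l_def)
        then have "?c k = 0" by (rule key)
        then have "s $ j * V $ j $ k = 0" using ne by simp
        then show False using pos by linarith
      qed
    qed
  qed
  show ?thesis using injl indep cone anch by blast
qed

end
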